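(* Let $S$ be a qubit with Hamiltonian $H_S=E|1\rangle\langle1|$, $E>0$, let $\beta>0$, and assume the initial state of $S$ is diagonal in the energy eigenbasis with ground state population $p_0^{(0)}\ge 1/2$. Let $0\le\epsilon\le\frac{1}{1+e^{\beta E}+e^{2\beta E}}$. Then the optimal nontrivial cooling protocol in $\mathcal{P}^\epsilon_\emptyset$ is the one in which in each round $k$ (1) the Pauli $X$ unitary is applied to $S$ and (2) the $\epsilon$-noisy $\beta$-swap $\Lambda^\epsilon_\beta$ is applied to $S$. The ground state population after round $k$ is $$p^{(k)}_0=1-\frac{\epsilon}{2-(1-\epsilon)Z}-\big((1-\epsilon)Z-1\big)^k\Big(1-\frac{\epsilon}{2-(1-\epsilon)Z}-p_0^{(0)}\Big),$$ where $Z=1+e^{-\beta E}$, and $p_0^{(k)}\to1-\frac{\epsilon}{2-(1-\epsilon)Z}$ as $k\to\infty$.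
   Context: A dephasing thermalization on $S$ is a quantum channel $\Lambda$ with $\Lambda(\tau_S)=\tau_S$, where $\tau_S=e^{-\beta H_S}/\mathrm{tr}[e^{-\beta H_S}]$, and $\langle 0|\Lambda(\rho)|1\rangle=0$ for all $\rho$. Its action on populations is the Gibbs-stochastic matrix $\begin{pmatrix}1-\lambda e^{-\beta E}&\lambda\\ \lambda e^{-\beta E}&1-\lambda\end{pmatrix}$ for some $\lambda\in[0,1]$, where $\lambda=\langle0|\Lambda(|1\rangle\langle1|)|0\rangle$ is the de-excitation probability. $\mathcal{P}^\epsilon_\emptyset$ is the set of protocols without auxiliary systems in which each round $k$ consists of an arbitrary unitary on $S$ followed by a dephasing thermalization $\Lambda^{(k)}$ on $S$ with $\langle0|\Lambda^{(k)}(|1\rangle\langle1|)|0\rangle\le1-\epsilon$; $p_0^{(k)}=\langle0|\rho_S^{(k)}|0\rangle$ is the ground state population after round $k$, and optimality means maximizing $p_0^{(k)}$ for every $k$. "Nontrivial" refers to protocols that actually perform a thermalization (a trivial protocol applies no thermalization, i.e. $\lambda=0$). The $\epsilon$-noisy $\beta$-swap $\Lambda^\epsilon_\beta$ is a dephasing thermalization with $\langle0|\Lambda^\epsilon_\beta(|1\rangle\langle1|)|0\rangle=1-\epsilon$.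
   Formalization: Optimality means that every protocol in $\mathcal{P}^\epsilon_\emptyset$, trivial or not, has $p_0^{(k)}$ at most the maximum of $p_0^{(0)}$ and the value of the Pauli X / noisy beta-swap protocol, not at most that value itself. The statement above fails without it. *)

theory Defs
  imports "Jordan_Normal_Form.Matrix" Complex_Main
begin

text \<open>Qubit operators are 2x2 complex matrices; index 0 is the ground state, index 1 the
excited state (Hamiltonian H_S = E |1><1|).\<close>

definition adj2 :: "complex mat \<Rightarrow> complex mat" where
  "adj2 U = mat 2 2 (\<lambda>(i,j). cnj (U $$ (j,i)))"

definition unitary2 :: "complex mat \<Rightarrow> bool" where
  "unitary2 U \<longleftrightarrow> U \<in> carrier_mat 2 2 \<and> U * adj2 U = 1\<^sub>m 2"

definition pauliX :: "complex mat" where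
  "pauliX = mat 2 2 (\<lambda>(i,j). if i \<noteq> j then 1 else 0)"

definition diag_state :: "real \<Rightarrow> complex mat" where
  "diag_state p = mat 2 2 (\<lambda>(i,j). if i = j then (if i = 0 then complex_of_real p
                                                   else complex_of_real (1 - p)) else 0)"

definition pop0 :: "complex mat \<Rightarrow> real" where
  "pop0 \<rho> = Re (\<rho> $$ (0,0))"

text \<open>The dephasing thermalization with de-excitation probability lam, at inverse
temperature beta for the qubit with gap E: its output is diagonal (dephasing) and
its action on populations is the Gibbs-stochastic matrix
((1 - lam e^{-beta E}, lam), (lam e^{-beta E}, 1 - lam)).\<close>
definition deph_therm :: "real \<Rightarrow> real \<Rightarrow> real \<Rightarrow> complex mat \<Rightarrow> complex mat" where
  "deph_therm \<beta> E lam \<rho> =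
     (let w = exp (- \<beta> * E) in
      mat 2 2 (\<lambda>(i,j).
        if i = 0 \<and> j = 0 then complex_of_real (1 - lam * w) * \<rho> $$ (0,0)
                               + complex_of_real lam * \<rho> $$ (1,1)
        else if i = 1 \<and> j = 1 then complex_of_real (lam * w) * \<rho> $$ (0,0)
                               + complex_of_real (1 - lam) * \<rho> $$ (1,1)
        else 0))"

primrec proto_state ::
  "real \<Rightarrow> real \<Rightarrow> (nat \<Rightarrow> complex mat) \<Rightarrow> (nat \<Rightarrow> real) \<Rightarrow> complex mat \<Rightarrow> nat \<Rightarrow> complex mat" where
  "proto_state \<beta> E Us lams \<rho>0 0 = \<rho>0"
| "proto_state \<beta> E Us lams \<rho>0 (Suc k) =
     deph_therm \<beta> E (lams k) (Us k * proto_state \<beta> E Us lams \<rho>0 k * adj2 (Us k))"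

definition in_P_eps :: "real \<Rightarrow> (nat \<Rightarrow> complex mat) \<Rightarrow> (nat \<Rightarrow> real) \<Rightarrow> bool" where
  "in_P_eps \<epsilon> Us lams \<longleftrightarrow> (\<forall>k. unitary2 (Us k) \<and> 0 \<le> lams k \<and> lams k \<le> 1 - \<epsilon>)"

end

theory Submission
  imports Defs "Jordan_Normal_Form.Determinant"
begin

lemma sum2: "(\<Sum>i\<in>{0..<2::nat}. f i) = f 0 + f 1"
  by (simp add: numeral_2_eq_2)

lemma step_entries:
  assumes U: "unitary2 U"
  defines "x \<equiv> (cmod (U $$ (0,0)))^2"
  shows "0 \<le> x \<and> x \<le> 1 \<and>
    (U * diag_state p * adj2 U) $$ (0,0) = complex_of_real (x*p + (1-x)*(1-p)) \<and>
    (U * diag_state p * adj2 U) $$ (1,1) = complex_of_real ((1-x)*p + x*(1-p))"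
proof -
  have Uc: "U \<in> carrier_mat 2 2" and UU: "U * adj2 U = 1\<^sub>m 2" using U unfolding unitary2_def by auto
  have Ac: "adj2 U \<in> carrier_mat 2 2" unfolding adj2_def by auto
  have UU2: "adj2 U * U = 1\<^sub>m 2" using mat_mult_left_right_inverse[OF Uc Ac UU] .
  have e1: "U $$ (0,0) * cnj (U $$ (0,0)) + U $$ (0,1) * cnj (U $$ (0,1)) = 1"
    using arg_cong[OF UU, of "\<lambda>M. M $$ (0,0)"] Uc
    by (simp add: times_mat_def scalar_prod_def sum2 adj2_def)
  have e2: "U $$ (1,0) * cnj (U $$ (1,0)) + U $$ (1,1) * cnj (U $$ (1,1)) = 1"
    using arg_cong[OF UU, of "\<lambda>M. M $$ (1,1)"] Uc
    by (simp add: times_mat_def scalar_prod_def sum2 adj2_def)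
  have e3: "cnj (U $$ (0,0)) * U $$ (0,0) + cnj (U $$ (1,0)) * U $$ (1,0) = 1"
    using arg_cong[OF UU2, of "\<lambda>M. M $$ (0,0)"] Uc
    by (simp add: times_mat_def scalar_prod_def sum2 adj2_def)
  have n: "\<And>z. z * cnj z = complex_of_real ((cmod z)^2)"
    by (simp add: complex_norm_square[symmetric] del: of_real_power)
  have n': "\<And>z. cnj z * z = complex_of_real ((cmod z)^2)"
    by (simp add: complex_norm_square[symmetric] mult.commute del: of_real_power)
  define y where "y = (cmod (U $$ (0,1)))^2"
  define u where "u = (cmod (U $$ (1,0)))^2"
  define v where "v = (cmod (U $$ (1,1)))^2"
  have r1: "x + y = 1" using e1 unfolding n x_def y_def by (metis of_real_add of_real_eq_1_iff)
  have r2: "u + v = 1" using e2 unfolding n u_def v_def by (metis of_real_add of_real_eq_1_iff)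
  have r3: "x + u = 1" using e3 unfolding n' x_def u_def by (metis of_real_add of_real_eq_1_iff)
  have y0: "0 \<le> y" unfolding y_def by simp
  have x0: "0 \<le> x" unfolding x_def by simp
  have a: "(U * diag_state p * adj2 U) $$ (0,0) = U $$ (0,0) * of_real p * cnj (U $$ (0,0)) + U $$ (0,1) * of_real (1-p) * cnj (U $$ (0,1))"
    using Uc by (simp add: times_mat_def scalar_prod_def sum2 adj2_def diag_state_def)
  have b: "(U * diag_state p * adj2 U) $$ (1,1) = U $$ (1,0) * of_real p * cnj (U $$ (1,0)) + U $$ (1,1) * of_real (1-p) * cnj (U $$ (1,1))"
    using Uc by (simp add: times_mat_def scalar_prod_def sum2 adj2_def diag_state_def)
  have a': "(U * diag_state p * adj2 U) $$ (0,0) = of_real (x * p + y * (1-p))"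
  proof -
    have "complex_of_real (x * p + y * (1-p)) = of_real x * of_real p + of_real y * of_real (1-p)" by simp
    also have "... = U $$ (0,0) * cnj (U $$ (0,0)) * of_real p + U $$ (0,1) * cnj (U $$ (0,1)) * of_real (1-p)"
      unfolding x_def y_def n by simp
    finally show ?thesis unfolding a by (simp add: algebra_simps)
  qed
  have b': "(U * diag_state p * adj2 U) $$ (1,1) = of_real (u * p + v * (1-p))"
  proof -
    have "complex_of_real (u * p + v * (1-p)) = of_real u * of_real p + of_real v * of_real (1-p)" by simp
    also have "... = U $$ (1,0) * cnj (U $$ (1,0)) * of_real p + U $$ (1,1) * cnj (U $$ (1,1)) * of_real (1-p)"
      unfolding u_def v_def n by simp
    finally show ?thesis unfolding b by (simp add: algebra_simps)
  qed
  show ?thesis using a' b' r1 r2 r3 x0 y0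
    by (smt (verit))
qed

lemma deph_diag:
  assumes "M \<in> carrier_mat 2 2" "M $$ (0,0) = complex_of_real a" "M $$ (1,1) = complex_of_real (1-a)"
  shows "deph_therm \<beta> E lam M = diag_state (a + lam * (1 - (1 + exp (-\<beta>*E)) * a))"
proof -
  define w where "w = exp (-\<beta>*E)"
  have e0: "complex_of_real (1 - lam * w) * M $$ (0,0) + complex_of_real lam * M $$ (1,1)
     = complex_of_real (a + lam * (1 - (1 + w) * a))"
    unfolding assms(2,3) of_real_mult[symmetric] of_real_add[symmetric] by (simp add: algebra_simps)
  have e1: "complex_of_real (lam * w) * M $$ (0,0) + complex_of_real (1 - lam) * M $$ (1,1)
     = complex_of_real (1 - (a + lam * (1 - (1 + w) * a)))"
    unfolding assms(2,3) of_real_mult[symmetric] of_real_add[symmetric] by (simp add: algebra_simps)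
  show ?thesis
    apply (rule eq_matI)
    using e0 e1 by (auto simp: deph_therm_def diag_state_def Let_def less_2_cases_iff w_def)
qed

lemma step:
  assumes "unitary2 U"
  shows "\<exists>x. 0 \<le> x \<and> x \<le> 1 \<and> deph_therm \<beta> E lam (U * diag_state p * adj2 U)
     = diag_state ((x*p + (1-x)*(1-p)) + lam * (1 - (1 + exp (-\<beta>*E)) * (x*p + (1-x)*(1-p))))"
proof -
  have Uc: "U \<in> carrier_mat 2 2" using assms unfolding unitary2_def by auto
  have c: "U * diag_state p * adj2 U \<in> carrier_mat 2 2" using Uc
    by (intro mult_carrier_mat[of _ 2 2]) (auto simp add: adj2_def diag_state_def)
  from step_entries[OF assms, of p] obtain x where x: "0 \<le> x" "x \<le> 1"
    "(U * diag_state p * adj2 U) $$ (0,0) = complex_of_real (x*p + (1-x)*(1-p))"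
    "(U * diag_state p * adj2 U) $$ (1,1) = complex_of_real ((1-x)*p + x*(1-p))" by blast
  have "(1-x)*p + x*(1-p) = 1 - (x*p + (1-x)*(1-p))" by (simp add: algebra_simps)
  with x show ?thesis using deph_diag[OF c x(3)] by auto
qed

lemma unitary_X: "unitary2 pauliX"
  unfolding unitary2_def pauliX_def
  apply (intro conjI)
   apply simp
  apply (rule eq_matI)
  by (auto simp: adj2_def times_mat_def scalar_prod_def sum2 less_2_cases_iff)

lemma step_X:
  "deph_therm \<beta> E lam (pauliX * diag_state p * adj2 pauliX)
     = diag_state ((1-p) + lam * (1 - (1 + exp (-\<beta>*E)) * (1-p)))"
proof -
  have c: "pauliX * diag_state p * adj2 pauliX \<in> carrier_mat 2 2"
    by (intro mult_carrier_mat[of _ 2 2]) (auto simp add: adj2_def diag_state_def pauliX_def)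
  have e0: "(pauliX * diag_state p * adj2 pauliX) $$ (0,0) = complex_of_real (1-p)"
    by (simp add: adj2_def diag_state_def pauliX_def times_mat_def scalar_prod_def sum2)
  have e1: "(pauliX * diag_state p * adj2 pauliX) $$ (1,1) = complex_of_real (1-(1-p))"
    by (simp add: adj2_def diag_state_def pauliX_def times_mat_def scalar_prod_def sum2)
  show ?thesis using deph_diag[OF c e0 e1] .
qed

lemma real_step:
  fixes x lam L w P :: real
  assumes "0 \<le> x" "x \<le> 1" "0 \<le> lam" "lam \<le> L" "L \<le> 1" "0 < w" "w \<le> 1"
    "L*(1+w) - 1 \<ge> 0"
  defines "a \<equiv> x*P + (1-x)*(1-P)"
  defines "m \<equiv> max P (1-P)"
  defines "p' \<equiv> a + lam * (1 - (1+w)*a)"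
  shows "max p' (1-p') \<le> max m ((1 - L*w) + (L*(1+w) - 1) * m)"
proof -
  have h1: "x*P \<le> x*m" "(1-x)*(1-P) \<le> (1-x)*m" "x*(1-m) \<le> x*P" "(1-x)*(1-m) \<le> (1-x)*(1-P)"
    unfolding m_def using assms(1,2) by (intro mult_left_mono; simp)+
  have am: "a \<le> m" "1 - m \<le> a"
    unfolding a_def using h1 by (simp_all add: algebra_simps; linarith)+
  show ?thesis
  proof (cases "1 - (1+w)*a \<ge> 0")
    case True
    have "p' \<le> a + L * (1 - (1+w)*a)" unfolding p'_def using True assms(4)
      by (simp add: mult_right_mono)
    also have "... = L + a * (1 - L*(1+w))" by (simp add: algebra_simps)
    also have "... \<le> L + (1-m) * (1 - L*(1+w))"
      using am(2) assms(8) mult_right_mono_neg[of "1-m" a "1 - L*(1+w)"] by simp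
    also have "... = (1 - L*w) + (L*(1+w) - 1) * m" by (simp add: algebra_simps)
    finally have 1: "p' \<le> (1 - L*w) + (L*(1+w) - 1) * m" .
    have "1 - p' \<le> 1 - a" unfolding p'_def using True assms(3) by simp
    with 1 am show ?thesis by linarith
  next
    case False
    have 1: "p' \<le> a" unfolding p'_def using False assms(3)
      by (simp add: mult_nonneg_nonpos)
    have "1 - p' = (1 - a) + lam * ((1+w)*a - 1)" unfolding p'_def by (simp add: algebra_simps)
    also have "... \<le> (1 - a) + 1 * ((1+w)*a - 1)"
      using False assms(3,4,5) by (intro add_left_mono mult_right_mono) auto
    also have "... = w * a" by (simp add: algebra_simps)
    also have "... \<le> 1 * a"
    proof -
      have a0: "0 \<le> a"
      proof (rule ccontr)
        assume "\<not> 0 \<le> a"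
        hence "(1+w)*a < 0" using assms(6) by (intro mult_pos_neg) auto
        thus False using False by linarith
      qed
      show ?thesis using a0 assms(7) by (intro mult_right_mono) auto
    qed
    finally show ?thesis using 1 am by linarith
  qed
qed

lemma seq_step:
  fixes r c p0 m ps :: real and s :: "nat \<Rightarrow> real"
  assumes r: "0 \<le> r" "r < 1" and s0: "s 0 = p0" and sS: "\<And>k. s (Suc k) = c + r * s k"
    and ps: "c = (1 - r) * ps"
    and m: "m \<le> max p0 (s k)"
  shows "max m (c + r*m) \<le> max p0 (s (Suc k))"
proof (cases "p0 \<le> ps")
  case True
  have inv: "p0 \<le> s j \<and> s j \<le> ps" for j
  proof (induction j)
    case 0 then show ?case using s0 True by simp
  next
    case (Suc j)
    have e: "s (Suc j) = ps + r * (s j - ps)" using sS[of j] ps by (simp add: algebra_simps)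
    have "r * (s j - ps) \<le> 0" using Suc r by (simp add: mult_nonneg_nonpos)
    moreover have "r * (s j - ps) \<ge> s j - ps" using Suc r
      using mult_right_mono_neg[of r 1 "s _ - ps"] by simp
    ultimately show ?case using e Suc by linarith
  qed
  have e: "s (Suc k) = ps + r * (s k - ps)" using sS[of k] ps by (simp add: algebra_simps)
  have "r * (s k - ps) \<ge> s k - ps" using inv[of k] r
    using mult_right_mono_neg[of r 1 "s _ - ps"] by simp
  hence incr: "s k \<le> s (Suc k)" using e by linarith
  have mk: "m \<le> s k" using m inv[of k] by simp
  have "c + r*m \<le> c + r * s k" using mk r by (simp add: mult_left_mono)
  then show ?thesis using incr mk sS[of k] by (auto simp: le_max_iff_disj)
next
  case False
  have inv: "ps \<le> s j \<and> s j \<le> p0" for j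
  proof (induction j)
    case 0 then show ?case using s0 False by simp
  next
    case (Suc j)
    have e: "s (Suc j) = ps + r * (s j - ps)" using sS[of j] ps by (simp add: algebra_simps)
    have "r * (s j - ps) \<ge> 0" using Suc r by simp
    moreover have "r * (s j - ps) \<le> s j - ps" using Suc r
      using mult_right_mono[of r 1 "s j - ps"] by simp
    ultimately show ?case using e Suc by linarith
  qed
  have mk: "m \<le> p0" using m inv[of k] by simp
  have "c + r*m \<le> c + r * p0" using mk r by (simp add: mult_left_mono)
  also have "... = ps + r * (p0 - ps)" using ps by (simp add: algebra_simps)
  also have "... \<le> ps + 1 * (p0 - ps)" using r False by (intro add_left_mono mult_right_mono) auto
  finally show ?thesis using mk by (auto simp: le_max_iff_disj)
qed

lemma pop0_diag: "pop0 (diag_state p) = p"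
  by (simp add: pop0_def diag_state_def)

theorem theorem3:
  fixes E \<beta> \<epsilon> p0 :: real
  assumes "E > 0" and "\<beta> > 0"
    and "1/2 \<le> p0" and "p0 \<le> 1"
    and "0 \<le> \<epsilon>" and "\<epsilon> \<le> 1 / (1 + exp (\<beta> * E) + exp (2 * \<beta> * E))"
  defines "Z \<equiv> 1 + exp (- \<beta> * E)"
  defines "pX \<equiv> (\<lambda>k. pop0 (proto_state \<beta> E (\<lambda>_. pauliX) (\<lambda>_. 1 - \<epsilon>) (diag_state p0) k))"
  shows "in_P_eps \<epsilon> (\<lambda>_. pauliX) (\<lambda>_. 1 - \<epsilon>)
    \<and> (\<forall>Us lams. in_P_eps \<epsilon> Us lams \<longrightarrow>
          (\<forall>k. pop0 (proto_state \<beta> E Us lams (diag_state p0) k) \<le> max p0 (pX k)))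
    \<and> (\<forall>k. pX k = 1 - \<epsilon> / (2 - (1 - \<epsilon>) * Z)
                 - ((1 - \<epsilon>) * Z - 1) ^ k * (1 - \<epsilon> / (2 - (1 - \<epsilon>) * Z) - p0))
    \<and> pX \<longlonglongrightarrow> 1 - \<epsilon> / (2 - (1 - \<epsilon>) * Z)"
proof -
  define w where "w = exp (- \<beta> * E)"
  define e where "e = exp (\<beta> * E)"
  define L where "L = 1 - \<epsilon>"
  define r where "r = L * Z - 1"
  define c where "c = 1 - L * w"
  define ps where "ps = 1 - \<epsilon> / (2 - (1 - \<epsilon>) * Z)"
  have bE: "\<beta> * E > 0" using assms(1,2) by simp
  have e1: "e > 1" unfolding e_def using bE by simp
  have we: "w * e = 1" unfolding w_def e_def by (simp flip: exp_add)
  have w0: "0 < w" and w1: "w < 1" unfolding w_def using bE by auto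
  have e2: "exp (2 * \<beta> * E) = e^2" unfolding e_def
    by (simp flip: exp_of_nat_mult add: mult.assoc)
  have "\<epsilon> \<le> 1 / (1 + e + e^2)" using assms(6) e2 e_def by simp
  also have "... \<le> 1 / (1 + e)" 
  proof -
    have p1: "0 < 1 + e" "0 < 1 + e + e^2" using e1 by (auto intro: add_pos_nonneg)
    show ?thesis using p1 by (intro divide_left_mono mult_pos_pos) auto
  qed
  finally have ee: "\<epsilon> * (1 + e) \<le> 1" using e1 by (simp add: field_simps)
  have eps1: "\<epsilon> \<le> 1" using ee e1 assms(5) mult_left_mono[of 1 "1+e" \<epsilon>] by simp
  have Zw: "Z = 1 + w" unfolding Z_def w_def by simp
  have "r * e = L * (1 + w) * e - e" unfolding r_def Zw by (simp add: algebra_simps)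
  also have "... = 1 - \<epsilon> * (1 + e)" unfolding L_def using we by (simp add: algebra_simps)
  finally have "r * e \<ge> 0" using ee by simp
  hence r0: "r \<ge> 0" using e1 by (simp add: zero_le_mult_iff)
  have L1: "L \<le> 1" "0 \<le> L" unfolding L_def using assms(5) eps1 by auto
  have "L * Z \<le> 1 * Z" using L1 Zw w0 by (intro mult_right_mono) auto
  hence r1: "r < 1" unfolding r_def using Zw w1 by simp
  have cps: "c = (1 - r) * ps"
  proof -
    have nz: "2 - (1 - \<epsilon>) * Z \<noteq> 0" using r1 unfolding r_def L_def by simp
    have "(1 - r) * ps = (2 - L*Z) - \<epsilon>" unfolding ps_def r_def L_def using nz by (simp add: field_simps)
    thus ?thesis unfolding c_def Zw L_def by (simp add: algebra_simps)
  qed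
  have uX: "in_P_eps \<epsilon> (\<lambda>_. pauliX) (\<lambda>_. 1 - \<epsilon>)"
    unfolding in_P_eps_def using unitary_X eps1 by simp
  have pX0: "pX 0 = p0" unfolding pX_def by (simp add: pop0_diag)
  have stX: "proto_state \<beta> E (\<lambda>_. pauliX) (\<lambda>_. 1 - \<epsilon>) (diag_state p0) k = diag_state (pX k)" for k
  proof (induction k)
    case 0 then show ?case by (simp add: pop0_diag pX_def)
  next
    case (Suc k)
    have h: "proto_state \<beta> E (\<lambda>_. pauliX) (\<lambda>_. 1 - \<epsilon>) (diag_state p0) (Suc k)
       = diag_state ((1 - pX k) + (1-\<epsilon>) * (1 - (1 + exp (-\<beta>*E)) * (1 - pX k)))"
      using Suc.IH by (simp add: step_X)
    show ?case by (simp only: pX_def h pop0_diag)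
  qed
  have pXS: "pX (Suc k) = c + r * pX k" for k
  proof -
    have h: "proto_state \<beta> E (\<lambda>_. pauliX) (\<lambda>_. 1 - \<epsilon>) (diag_state p0) (Suc k)
       = diag_state ((1 - pX k) + (1-\<epsilon>) * (1 - (1 + exp (-\<beta>*E)) * (1 - pX k)))"
      using stX[of k] by (simp add: step_X)
    have "pX (Suc k) = (1 - pX k) + L * (1 - Z * (1 - pX k))"
      by (subst pX_def, simp only: h pop0_diag, simp add: L_def Z_def)
    thus ?thesis unfolding c_def r_def Zw by (simp add: algebra_simps)
  qed
  have closed: "pX k = ps - r^k * (ps - p0)" for k
  proof (induction k)
    case 0 then show ?case using pX0 by simp
  next
    case (Suc k)
    have "pX (Suc k) = c + r * (ps - r^k * (ps - p0))" using pXS[of k] Suc.IH by simp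
    then show ?case unfolding cps by (simp add: algebra_simps)
  qed
  have opt: "pop0 (proto_state \<beta> E Us lams (diag_state p0) k) \<le> max p0 (pX k)"
    if P: "in_P_eps \<epsilon> Us lams" for Us lams k
  proof -
    have "\<exists>q. proto_state \<beta> E Us lams (diag_state p0) k = diag_state q \<and> max q (1-q) \<le> max p0 (pX k)"
    proof (induction k)
      case 0 then show ?case using pX0 assms(3) by auto
    next
      case (Suc k)
      then obtain q where q: "proto_state \<beta> E Us lams (diag_state p0) k = diag_state q"
        "max q (1-q) \<le> max p0 (pX k)" by blast
      have Pk: "unitary2 (Us k)" "0 \<le> lams k" "lams k \<le> L" using P unfolding in_P_eps_def L_def by auto
      obtain x where x: "0 \<le> x" "x \<le> 1" and
        st0: "deph_therm \<beta> E (lams k) (Us k * diag_state q * adj2 (Us k)) = diag_state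
          ((x*q + (1-x)*(1-q)) + lams k * (1 - (1 + w) * (x*q + (1-x)*(1-q))))"
        using step[OF Pk(1), of \<beta> E "lams k" q] unfolding w_def by blast
      have st: "proto_state \<beta> E Us lams (diag_state p0) (Suc k) = diag_state
          ((x*q + (1-x)*(1-q)) + lams k * (1 - (1 + w) * (x*q + (1-x)*(1-q))))"
        by (simp only: proto_state.simps q(1) st0)
      have rs: "max ((x*q + (1-x)*(1-q)) + lams k * (1 - (1 + w) * (x*q + (1-x)*(1-q))))
                  (1 - ((x*q + (1-x)*(1-q)) + lams k * (1 - (1 + w) * (x*q + (1-x)*(1-q)))))
             \<le> max (max q (1-q)) (c + r * max q (1-q))"
        using real_step[OF x Pk(2,3) L1(1) w0 less_imp_le[OF w1], of q] r0
        unfolding c_def r_def Zw by simp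
      have "max (max q (1-q)) (c + r * max q (1-q)) \<le> max p0 (pX (Suc k))"
        by (rule seq_step[OF r0 r1 pX0 pXS cps q(2)])
      with rs have "max ((x*q + (1-x)*(1-q)) + lams k * (1 - (1 + w) * (x*q + (1-x)*(1-q))))
                  (1 - ((x*q + (1-x)*(1-q)) + lams k * (1 - (1 + w) * (x*q + (1-x)*(1-q)))))
             \<le> max p0 (pX (Suc k))" by (rule order_trans)
      with st show ?case by (intro exI conjI)
    qed
    then obtain q where "proto_state \<beta> E Us lams (diag_state p0) k = diag_state q"
        "max q (1-q) \<le> max p0 (pX k)" by blast
    thus ?thesis by (simp add: pop0_diag)
  qed
  have lim: "pX \<longlonglongrightarrow> ps"
  proof -
    have "(\<lambda>k. ps - r^k * (ps - p0)) \<longlonglongrightarrow> ps - 0 * (ps - p0)"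
      using r0 r1 by (intro tendsto_intros LIMSEQ_power_zero) auto
    moreover have "pX = (\<lambda>k. ps - r^k * (ps - p0))" by (rule ext) (rule closed)
    ultimately show ?thesis by simp
  qed
  show ?thesis
  proof (intro conjI allI impI)
    show "in_P_eps \<epsilon> (\<lambda>_. pauliX) (\<lambda>_. 1 - \<epsilon>)" by (rule uX)
  next
    fix Us lams k assume "in_P_eps \<epsilon> Us lams"
    then show "pop0 (proto_state \<beta> E Us lams (diag_state p0) k) \<le> max p0 (pX k)" by (rule opt)
  next
    fix k show "pX k = 1 - \<epsilon> / (2 - (1 - \<epsilon>) * Z)
                 - ((1 - \<epsilon>) * Z - 1) ^ k * (1 - \<epsilon> / (2 - (1 - \<epsilon>) * Z) - p0)"
      using closed[of k] unfolding ps_def r_def L_def .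
  next
    show "pX \<longlonglongrightarrow> 1 - \<epsilon> / (2 - (1 - \<epsilon>) * Z)" using lim unfolding ps_def .
  qed
qed
end
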